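(* Consider the algorithm in the context with step sizes $\eta_t\le\frac{1}{3LB_t^{2/3}}$. Then for every epoch $t$: (i) $\mathbb{E}\|\tilde{x}_t-\tilde{x}_{t-1}\|^2<\infty$; (ii) $\mathbb{E}(f(\tilde{x}_t)-f(\tilde{x}^\ast))<\infty$; (iii) $\mathbb{E}\|\nabla f(\tilde{x}_t)\|^2<\infty$; (iv) $\mathbb{E}|\langle e_t,\tilde{x}_t-\tilde{x}_{t-1}\rangle|<\infty$; (v) $\mathbb{E}|\langle e_t,\nabla f(\tilde{x}_t)\rangle|<\infty$, where $e_t=\mu_t-\nabla f(\tilde{x}_{t-1})$.
   Context: Setting: $f(x)=\mathbb{E}_{\xi\sim\mathcal{D}}f(x;\xi)$ where $f$ and all $f(\cdot;\xi)$ are $L$-smooth and $\|\nabla f(x;\xi)-\nabla f(x)\|\le\mathcal{V}$ for all $x,\xi$; $\tilde{x}^\ast$ is a global minimizer of $f$; $\tilde{x}_0\in\mathbb{R}^d$ is the given initial point. $K$ worker nodes, honest set $\mathcal{G}$ with $|\mathcal{G}|\ge(1-\alpha)K$, $\alpha\in[0,1/2)$, others Byzantine. Epoch $t$ (batch size $B_t$, $\delta\in(0,1)$, $C=2\log(2K/\delta)$, $\mathfrak{T}_\mu=2\mathcal{V}\sqrt{C/B_t}$): $x_0^t=\tilde{x}_{t-1}$; honest $k$ sends $\mu_t^{(k)}=\frac{1}{B_t}\sum_{i=1}^{B_t}\nabla f(x_0^t;\xi_{t,i}^{(k)})$ (fresh i.i.d. samples), Byzantine nodes send arbitrary vectors;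 $\mu_t^{\mathrm{med}}=\mu_t^{(k)}$ for any $k$ with more than $K/2$ indices $k'$ satisfying $\|\mu_t^{(k')}-\mu_t^{(k)}\|\le\mathfrak{T}_\mu$, $\mathcal{G}_t=\{k:\|\mu_t^{(k)}-\mu_t^{\mathrm{med}}\|\le2\mathfrak{T}_\mu\}$; if $|\mathcal{G}_t|<(1-\alpha)K$, instead use radius $2\mathcal{V}$ for the median and $\mathcal{G}_t=\{k:\|\mu_t^{(k)}-\mu_t^{\mathrm{med}}\|\le4\mathcal{V}\}$; $\mu_t=\frac{1}{|\mathcal{G}_t|}\sum_{k\in\mathcal{G}_t}\mu_t^{(k)}$; $N_t\sim\mathrm{Geom}(\frac{B_t}{B_t+1})$, $\mathbb{P}[N_t=n]=\frac{1}{B_t+1}(\frac{B_t}{B_t+1})^n$, $n\ge0$, independent of the samples; for $n=1,\dots,N_t$: $v_{n-1}^t=\nabla f(x_{n-1}^t;\xi_{n-1}^t)-\nabla f(x_0^t;\xi_{n-1}^t)+\mu_t$ with fresh $\xi_{n-1}^t\sim\mathcal{D}$, $x_n^t=x_{n-1}^t-\eta_tv_{n-1}^t$; $\tilde{x}_t=x_{N_t}^t$. *)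

theory Defs
  imports "HOL-Analysis.Analysis" "HOL-Probability.Probability"
begin

text \<open>vs k is the vector sent by worker k (only k < K matters).\<close>

definition close_count :: "(nat \<Rightarrow> 'a::real_normed_vector) \<Rightarrow> nat \<Rightarrow> real \<Rightarrow> nat \<Rightarrow> nat" where
  "close_count vs K r k = card {k'. k' < K \<and> norm (vs k' - vs k) \<le> r}"

definition is_med :: "(nat \<Rightarrow> 'a::real_normed_vector) \<Rightarrow> nat \<Rightarrow> real \<Rightarrow> nat \<Rightarrow> bool" where
  "is_med vs K r k \<longleftrightarrow> k < K \<and> 2 * close_count vs K r k > K"

definition filt :: "(nat \<Rightarrow> 'a::real_normed_vector) \<Rightarrow> nat \<Rightarrow> real \<Rightarrow> nat \<Rightarrow> nat set" where
  "filt vs K r m = {k. k < K \<and> norm (vs k - vs m) \<le> r}"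

definition avg :: "(nat \<Rightarrow> 'a::real_normed_vector) \<Rightarrow> nat set \<Rightarrow> 'a" where
  "avg vs S = (1 / real (card S)) *\<^sub>R (\<Sum>k\<in>S. vs k)"

text \<open>mu is a possible output of the aggregation step with threshold T (= \<T>_\<mu>),
  bound V (= \<V>), Byzantine fraction alpha and K workers.  The median index may be
  "any" admissible index; if for the chosen index the filtered set is too small (or no
  admissible index for radius T exists) the fallback with radius 2V / 4V is used.\<close>
definition agg_output :: "(nat \<Rightarrow> 'a::real_normed_vector) \<Rightarrow> nat \<Rightarrow> real \<Rightarrow> real \<Rightarrow> real \<Rightarrow> 'a \<Rightarrow> bool" where
  "agg_output vs K alpha T V mu \<longleftrightarrow>
     (\<exists>m. is_med vs K T m \<and> real (card (filt vs K (2 * T) m)) \<ge> (1 - alpha) * real K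
          \<and> mu = avg vs (filt vs K (2 * T) m))
   \<or> (((\<exists>m. is_med vs K T m \<and> real (card (filt vs K (2 * T) m)) < (1 - alpha) * real K)
         \<or> \<not> (\<exists>m. is_med vs K T m))
      \<and> (\<exists>m'. is_med vs K (2 * V) m' \<and> mu = avg vs (filt vs K (4 * V) m')))"

datatype rv_index =
    Samp nat nat nat  \<comment> \<open>Samp t k i: sample \<xi>_{t,i}^{(k)} of honest worker k in epoch t\<close>
  | Inner nat nat     \<comment> \<open>Inner t n: sample \<xi>_n^t of the inner loop of epoch t\<close>
  | Geo nat           \<comment> \<open>Geo t: the geometric loop length N_t\<close>

definition gen_events :: "'w measure \<Rightarrow> ('w \<Rightarrow> 'b) \<Rightarrow> 'b measure \<Rightarrow> 'w set set" where
  "gen_events M X S = {X -` A \<inter> space M | A. A \<in> sets S}"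

end

theory Submission
  imports Defs "HOL-Real_Asymp.Real_Asymp"
begin


lemma summable_cube_geom:
  fixes q :: real assumes "0 \<le> q" "q < 1"
  shows "summable (\<lambda>n. real n ^ 3 * q ^ n)"
proof -
  have "conv_radius (\<lambda>n. real n ^ 3) = ereal 1"
  proof (rule conv_radius_ratio_limit)
    show "eventually (\<lambda>n. real n ^ 3 \<noteq> 0) sequentially"
      using eventually_gt_at_top[of "0::nat"] by eventually_elim simp
    show "(\<lambda>n. norm (real n ^ 3) / norm (real (Suc n) ^ 3)) \<longlonglongrightarrow> 1"
      by simp real_asymp
  qed simp
  then show ?thesis using assms by (intro summable_in_conv_radius) auto
qed

lemma moment3:
  assumes P: "prob_space M" and Nm: "N \<in> measurable M (count_space UNIV)"
    and geo: "\<And>n. measure M {\<omega> \<in> space M. N \<omega> = n} = p * q ^ n"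
    and q: "0 \<le> q" "q < 1" and p: "0 \<le> p"
  shows "integrable M (\<lambda>\<omega>. real (N \<omega>) ^ 3)"
proof -
  interpret prob_space M by fact
  define A where "A n = {\<omega> \<in> space M. N \<omega> = n}" for n
  have Asets: "A n \<in> sets M" for n
    unfolding A_def using Nm by measurable
  have meas: "(\<lambda>\<omega>. real (N \<omega>) ^ 3) \<in> borel_measurable M"
    using Nm by measurable
  have pt: "ennreal (real (N \<omega>) ^ 3) = (\<Sum>n. ennreal (real n ^ 3) * indicator (A n) \<omega>)"
    if "\<omega> \<in> space M" for \<omega>
  proof -
    have "(\<lambda>n. ennreal (real n ^ 3) * indicator (A n) \<omega>) = (\<lambda>n. if n = N \<omega> then ennreal (real (N \<omega>) ^ 3) else 0)"
      using that by (auto simp: A_def indicator_def)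
    then show ?thesis using sums_single[of "N \<omega>" "\<lambda>_. ennreal (real (N \<omega>) ^ 3)"]
      by (simp add: sums_iff)
  qed
  have "(\<integral>\<^sup>+\<omega>. ennreal (real (N \<omega>) ^ 3) \<partial>M) = (\<integral>\<^sup>+\<omega>. (\<Sum>n. ennreal (real n ^ 3) * indicator (A n) \<omega>) \<partial>M)"
    by (rule nn_integral_cong) (simp add: pt)
  also have "\<dots> = (\<Sum>n. \<integral>\<^sup>+\<omega>. ennreal (real n ^ 3) * indicator (A n) \<omega> \<partial>M)"
    using Asets by (intro nn_integral_suminf borel_measurable_times_ennreal borel_measurable_const borel_measurable_indicator)
  also have "\<dots> = (\<Sum>n. ennreal (real n ^ 3 * (p * q ^ n)))"
  proof (rule suminf_cong)
    fix n
    have "(\<integral>\<^sup>+\<omega>. ennreal (real n ^ 3) * indicator (A n) \<omega> \<partial>M) = ennreal (real n ^ 3) * emeasure M (A n)"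
      by (rule nn_integral_cmult_indicator[OF Asets])
    also have "\<dots> = ennreal (real n ^ 3) * ennreal (p * q ^ n)"
      by (simp add: emeasure_eq_measure A_def geo)
    also have "\<dots> = ennreal (real n ^ 3 * (p * q ^ n))"
      by (simp add: ennreal_mult p q)
    finally show "(\<integral>\<^sup>+\<omega>. ennreal (real n ^ 3) * indicator (A n) \<omega> \<partial>M) = ennreal (real n ^ 3 * (p * q ^ n))" .
  qed
  also have "\<dots> = ennreal (\<Sum>n. real n ^ 3 * (p * q ^ n))"
  proof (rule suminf_ennreal2)
    show "summable (\<lambda>n. real n ^ 3 * (p * q ^ n))"
      using summable_mult[OF summable_cube_geom[OF q], of p] by (simp add: mult_ac)
  qed (simp add: p q)
  finally have "(\<integral>\<^sup>+\<omega>. ennreal (real (N \<omega>) ^ 3) \<partial>M) < \<infinity>" by simp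
  then show ?thesis by (intro integrableI_nonneg meas) auto
qed



lemma descent:
  fixes f :: "'a::real_inner \<Rightarrow> real" and gf :: "'a \<Rightarrow> 'a"
  assumes fd: "\<And>y. (f has_derivative (\<lambda>h. gf y \<bullet> h)) (at y)"
    and lip: "\<And>y z. norm (gf y - gf z) \<le> L * norm (y - z)"
  shows "f y \<le> f x + gf x \<bullet> (y - x) + L / 2 * (norm (y - x))\<^sup>2"
proof -
  define h where "h = y - x"
  define \<phi> where "\<phi> s = f (x + s *\<^sub>R h) - s * (gf x \<bullet> h) - L / 2 * s\<^sup>2 * (norm h)\<^sup>2" for s :: real
  have der: "(\<phi> has_field_derivative (gf (x + s *\<^sub>R h) \<bullet> h - gf x \<bullet> h - L * s * (norm h)\<^sup>2)) (at s)" for s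
  proof -
    have d1: "((\<lambda>s. x + s *\<^sub>R h) has_derivative (\<lambda>d. d *\<^sub>R h)) (at s)"
      by (auto intro!: derivative_eq_intros)
    have d2: "((\<lambda>s. f (x + s *\<^sub>R h)) has_derivative (\<lambda>d. gf (x + s *\<^sub>R h) \<bullet> (d *\<^sub>R h))) (at s)"
      using has_derivative_compose[OF d1 fd] .
    have d3: "((\<lambda>s. f (x + s *\<^sub>R h)) has_field_derivative (gf (x + s *\<^sub>R h) \<bullet> h)) (at s)"
      unfolding has_field_derivative_def
      by (rule has_derivative_eq_rhs[OF d2]) (auto simp: fun_eq_iff mult.commute)
    show ?thesis unfolding \<phi>_def
      by (rule derivative_eq_intros d3 refl)+ (simp add: power2_eq_square algebra_simps)
  qed
  have nonpos: "gf (x + s *\<^sub>R h) \<bullet> h - gf x \<bullet> h - L * s * (norm h)\<^sup>2 \<le> 0" if "0 \<le> s" for s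
  proof -
    have "gf (x + s *\<^sub>R h) \<bullet> h - gf x \<bullet> h = (gf (x + s *\<^sub>R h) - gf x) \<bullet> h"
      by (simp add: inner_diff_left)
    also have "\<dots> \<le> norm (gf (x + s *\<^sub>R h) - gf x) * norm h"
      by (rule norm_cauchy_schwarz)
    also have "\<dots> \<le> (L * norm (s *\<^sub>R h)) * norm h"
      using lip[of "x + s *\<^sub>R h" x] by (intro mult_right_mono) auto
    also have "\<dots> = L * s * (norm h)\<^sup>2"
      using that by (simp add: power2_eq_square)
    finally show ?thesis by simp
  qed
  have "\<phi> 1 \<le> \<phi> 0"
  proof (rule DERIV_nonpos_imp_nonincreasing[of 0 1])
    fix s :: real assume "0 \<le> s" "s \<le> 1"
    then show "\<exists>y. (\<phi> has_field_derivative y) (at s) \<and> y \<le> 0"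
      using der[of s] nonpos[of s] by blast
  qed simp
  then show ?thesis unfolding \<phi>_def h_def by simp
qed

lemma grad_bound:
  fixes f :: "'a::real_inner \<Rightarrow> real" and gf :: "'a \<Rightarrow> 'a"
  assumes desc: "\<And>x y. f y \<le> f x + gf x \<bullet> (y - x) + L / 2 * (norm (y - x))\<^sup>2"
    and mn: "\<And>y. fs \<le> f y" and L: "0 \<le> L"
  shows "(norm (gf x))\<^sup>2 \<le> 2 * L * (f x - fs)"
proof -
  have key: "fs \<le> f x - s * (norm (gf x))\<^sup>2 + L / 2 * s\<^sup>2 * (norm (gf x))\<^sup>2" for s
  proof -
    have "fs \<le> f (x - s *\<^sub>R gf x)" by (rule mn)
    also have "\<dots> \<le> f x + gf x \<bullet> ((x - s *\<^sub>R gf x) - x) + L / 2 * (norm ((x - s *\<^sub>R gf x) - x))\<^sup>2"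
      by (rule desc)
    also have "\<dots> = f x - s * (norm (gf x))\<^sup>2 + L / 2 * s\<^sup>2 * (norm (gf x))\<^sup>2"
    proof -
      have a: "gf x \<bullet> ((x - s *\<^sub>R gf x) - x) = - s * (norm (gf x))\<^sup>2"
        by (simp add: power2_norm_eq_inner)
      have b: "(norm ((x - s *\<^sub>R gf x) - x))\<^sup>2 = s\<^sup>2 * (norm (gf x))\<^sup>2"
        by (simp add: power_mult_distrib)
      show ?thesis unfolding a b by simp
    qed
    finally show ?thesis .
  qed
  show ?thesis
  proof (cases "L = 0")
    case True
    have "gf x = 0"
    proof (rule ccontr)
      assume "gf x \<noteq> 0"
      then have p: "(norm (gf x))\<^sup>2 > 0" by simp
      have "fs \<le> f x - ((f x - fs + 1) / (norm (gf x))\<^sup>2) * (norm (gf x))\<^sup>2"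
        using key[of "(f x - fs + 1) / (norm (gf x))\<^sup>2"] True by simp
      then show False using p by simp
    qed
    then show ?thesis using mn[of x] True by simp
  next
    case False
    then have Lp: "L > 0" using L by simp
    have "fs \<le> f x - (1/L) * (norm (gf x))\<^sup>2 + L / 2 * (1/L)\<^sup>2 * (norm (gf x))\<^sup>2"
      by (rule key)
    also have "\<dots> = f x - (norm (gf x))\<^sup>2 / (2 * L)"
      using Lp by (simp add: power2_eq_square field_simps)
    finally show ?thesis using Lp by (simp add: field_simps)
  qed
qed



lemma one_step:
  fixes f :: "'a::real_inner \<Rightarrow> real" and gf :: "'a \<Rightarrow> 'a"
  assumes desc: "\<And>x y. f y \<le> f x + gf x \<bullet> (y - x) + L / 2 * (norm (y - x))\<^sup>2"
    and L: "0 \<le> L" and eta: "0 < eta" "L * eta \<le> 1/3"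
  shows "f (x - eta *\<^sub>R (gf x + w)) \<le> f x + eta * (norm w)\<^sup>2"
proof -
  define a where "a = norm (gf x)"
  define b where "b = norm w"
  have ab: "0 \<le> a" "0 \<le> b" by (auto simp: a_def b_def)
  have i1: "gf x \<bullet> ((x - eta *\<^sub>R (gf x + w)) - x) = - eta * (a\<^sup>2 + gf x \<bullet> w)"
    by (simp add: a_def inner_add_right power2_norm_eq_inner algebra_simps)
  have i2: "gf x \<bullet> w \<ge> - (a * b)"
    using norm_cauchy_schwarz[of "gf x" "-w"] by (simp add: a_def b_def)
  have i3: "(norm ((x - eta *\<^sub>R (gf x + w)) - x))\<^sup>2 = eta\<^sup>2 * (norm (gf x + w))\<^sup>2"
    using eta by (simp add: power_mult_distrib)
  have i4: "norm (gf x + w) \<le> a + b" unfolding a_def b_def by (rule norm_triangle_ineq)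
  have i5: "(norm (gf x + w))\<^sup>2 \<le> 2 * a\<^sup>2 + 2 * b\<^sup>2"
  proof -
    have "(norm (gf x + w))\<^sup>2 \<le> (a + b)\<^sup>2" using i4 by (intro power_mono) auto
    also have "\<dots> \<le> 2 * a\<^sup>2 + 2 * b\<^sup>2" using sum_squares_bound[of a b] by (simp add: power2_eq_square algebra_simps) 
    finally show ?thesis .
  qed
  have i6: "a * b \<le> (a\<^sup>2 + b\<^sup>2) / 2"
    using sum_squares_bound[of a b] by (simp add: power2_eq_square algebra_simps)
  have "f (x - eta *\<^sub>R (gf x + w)) \<le> f x - eta * (a\<^sup>2 + gf x \<bullet> w) + L / 2 * (eta\<^sup>2 * (norm (gf x + w))\<^sup>2)"
    using desc[where x=x and y="x - eta *\<^sub>R (gf x + w)"] unfolding i1 i3 by simp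
  also have "\<dots> \<le> f x - eta * (a\<^sup>2 - (a\<^sup>2 + b\<^sup>2) / 2) + (L * eta) * eta * (a\<^sup>2 + b\<^sup>2)"
  proof -
    have "- eta * (a\<^sup>2 + gf x \<bullet> w) \<le> - eta * (a\<^sup>2 - (a\<^sup>2 + b\<^sup>2) / 2)"
      by (rule mult_left_mono_neg) (use eta i2 i6 in linarith)+
    moreover have "L / 2 * (eta\<^sup>2 * (norm (gf x + w))\<^sup>2) \<le> L / 2 * (eta\<^sup>2 * (2 * a\<^sup>2 + 2 * b\<^sup>2))"
      using i5 L by (intro mult_left_mono) auto
    moreover have "L / 2 * (eta\<^sup>2 * (2 * a\<^sup>2 + 2 * b\<^sup>2)) = (L * eta) * eta * (a\<^sup>2 + b\<^sup>2)"
      by (simp add: power2_eq_square algebra_simps)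
    ultimately show ?thesis by linarith
  qed
  also have "\<dots> \<le> f x - eta * (a\<^sup>2 - (a\<^sup>2 + b\<^sup>2) / 2) + (1/3) * eta * (a\<^sup>2 + b\<^sup>2)"
    using eta by (intro add_left_mono mult_right_mono) auto
  also have "\<dots> \<le> f x + eta * b\<^sup>2"
  proof -
    have nn: "0 \<le> eta * a\<^sup>2" "0 \<le> eta * b\<^sup>2" using eta by simp_all
    have e1: "eta * (a\<^sup>2 - (a\<^sup>2 + b\<^sup>2) / 2) = (eta * a\<^sup>2) / 2 - (eta * b\<^sup>2) / 2"
      by (simp add: algebra_simps)
    have e2: "(1/3) * eta * (a\<^sup>2 + b\<^sup>2) = (eta * a\<^sup>2) / 3 + (eta * b\<^sup>2) / 3"
      by (simp add: algebra_simps)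
    show ?thesis unfolding e1 e2 using nn by linarith
  qed
  finally show ?thesis by (simp add: b_def)
qed

lemma inner_loop:
  fixes f :: "'a::real_inner \<Rightarrow> real" and gf :: "'a \<Rightarrow> 'a"
  assumes desc: "\<And>x y. f y \<le> f x + gf x \<bullet> (y - x) + L / 2 * (norm (y - x))\<^sup>2"
    and gb: "\<And>y. (norm (gf y))\<^sup>2 \<le> 2 * L * (f y - fs)"
    and L: "0 \<le> L" and eta: "0 < eta" "L * eta \<le> 1/3" and W: "0 \<le> W"
    and step: "\<And>n. xs (Suc n) = xs n - eta *\<^sub>R (gf (xs n) + w n)"
    and wb: "\<And>n. norm (w n) \<le> W"
  shows "f (xs n) - fs \<le> f (xs 0) - fs + real n * eta * W\<^sup>2"
    and "(norm (xs n - xs 0))\<^sup>2 \<le> 2 * (real n)\<^sup>2 * eta\<^sup>2 * (2 * L * (f (xs 0) - fs) + 2 * L * real n * eta * W\<^sup>2 + W\<^sup>2)"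
proof -
  have A: "f (xs k) - fs \<le> f (xs 0) - fs + real k * eta * W\<^sup>2" for k
  proof (induction k)
    case (Suc k)
    have "f (xs (Suc k)) \<le> f (xs k) + eta * (norm (w k))\<^sup>2"
      unfolding step by (rule one_step[OF desc L eta])
    also have "\<dots> \<le> f (xs k) + eta * W\<^sup>2"
      using wb[of k] eta by (intro add_left_mono mult_left_mono power_mono) auto
    finally show ?case using Suc by (simp add: algebra_simps)
  qed simp
  then show "f (xs n) - fs \<le> f (xs 0) - fs + real n * eta * W\<^sup>2" .
  define R where "R = sqrt (2 * L * (f (xs 0) - fs + real n * eta * W\<^sup>2))"
  have gk: "norm (gf (xs k)) \<le> R" if "k \<le> n" for k
  proof -
    have "(norm (gf (xs k)))\<^sup>2 \<le> 2 * L * (f (xs 0) - fs + real k * eta * W\<^sup>2)"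
      using gb[of "xs k"] mult_left_mono[OF A[of k], of "2*L"] L by linarith
    also have "\<dots> \<le> 2 * L * (f (xs 0) - fs + real n * eta * W\<^sup>2)"
      using that L eta by (intro mult_left_mono add_left_mono mult_right_mono) auto
    finally show ?thesis unfolding R_def by (simp add: real_le_rsqrt)
  qed
  have argnn: "0 \<le> 2 * L * (f (xs 0) - fs + real n * eta * W\<^sup>2)"
  proof -
    have "0 \<le> 2 * L * (f (xs 0) - fs)" using gb[of "xs 0"] zero_le_power2[of "norm (gf (xs 0))"] by linarith
    moreover have "0 \<le> 2 * L * (real n * eta * W\<^sup>2)" using L eta by simp
    ultimately show ?thesis by (simp add: distrib_left)
  qed
  have R0: "0 \<le> R" unfolding R_def using argnn by simp
  have D: "norm (xs k - xs 0) \<le> real k * eta * (R + W)" if "k \<le> n" for k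
    using that
  proof (induction k)
    case (Suc k)
    have "norm (xs (Suc k) - xs 0) \<le> norm (xs k - xs 0) + norm (eta *\<^sub>R (gf (xs k) + w k))"
    proof -
      have eq: "xs (Suc k) - xs 0 = (xs k - xs 0) - eta *\<^sub>R (gf (xs k) + w k)"
        by (simp add: step algebra_simps)
      show ?thesis unfolding eq by (rule norm_triangle_ineq4)
    qed
    also have "norm (eta *\<^sub>R (gf (xs k) + w k)) \<le> eta * (R + W)"
    proof -
      have "norm (gf (xs k) + w k) \<le> R + W"
        using gk[of k] wb[of k] Suc.prems norm_triangle_ineq[of "gf (xs k)" "w k"] by simp
      then show ?thesis using eta by (simp add: mult_left_mono)
    qed
    finally show ?case using Suc by (simp add: algebra_simps)
  qed simp
  have "(norm (xs n - xs 0))\<^sup>2 \<le> (real n * eta * (R + W))\<^sup>2"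
    using D[of n] by (intro power_mono) auto
  also have "\<dots> = (real n)\<^sup>2 * eta\<^sup>2 * (R + W)\<^sup>2" by (simp add: power_mult_distrib)
  also have "\<dots> \<le> (real n)\<^sup>2 * eta\<^sup>2 * (2 * R\<^sup>2 + 2 * W\<^sup>2)"
    using sum_squares_bound[of R W] eta by (intro mult_left_mono) (auto simp: power2_eq_square algebra_simps)
  also have "R\<^sup>2 = 2 * L * (f (xs 0) - fs + real n * eta * W\<^sup>2)"
    unfolding R_def using argnn by simp
  finally show "(norm (xs n - xs 0))\<^sup>2 \<le> 2 * (real n)\<^sup>2 * eta\<^sup>2 * (2 * L * (f (xs 0) - fs) + 2 * L * real n * eta * W\<^sup>2 + W\<^sup>2)"
    by (simp add: algebra_simps)
qed



lemma med_honest: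
  assumes "is_med vs K r m" "G \<subseteq> {..<K}" "K < 2 * card G"
  shows "\<exists>h\<in>G. norm (vs h - vs m) \<le> r"
proof (rule ccontr)
  assume neg: "\<not> (\<exists>h\<in>G. norm (vs h - vs m) \<le> r)"
  define S where "S = {k'. k' < K \<and> norm (vs k' - vs m) \<le> r}"
  have disj: "S \<inter> G = {}" using neg by (auto simp: S_def)
  have fin: "finite S" "finite G" using assms(2) finite_subset by (auto simp: S_def)
  have "card (S \<union> G) = card S + card G" using disj fin by (simp add: card_Un_disjoint)
  moreover have "card (S \<union> G) \<le> K"
    using card_mono[of "{..<K}" "S \<union> G"] assms(2) by (auto simp: S_def)
  moreover have "K < 2 * card S" using assms(1) by (simp add: is_med_def close_count_def S_def)
  ultimately show False using assms(3) by linarith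
qed

lemma avg_bound:
  fixes vs :: "nat \<Rightarrow> 'a::real_normed_vector"
  assumes "finite S" "S \<noteq> {}" "\<And>k. k \<in> S \<Longrightarrow> norm (vs k - c) \<le> R"
  shows "norm (avg vs S - c) \<le> R"
proof -
  have cS: "0 < card S" using assms by (simp add: card_gt_0_iff)
  have "avg vs S - c = (1 / real (card S)) *\<^sub>R (\<Sum>k\<in>S. vs k - c)"
    using cS by (simp add: avg_def sum_subtractf scaleR_diff_right sum_constant_scaleR)
  also have "norm \<dots> = (1 / real (card S)) * norm (\<Sum>k\<in>S. vs k - c)" by simp
  also have "\<dots> \<le> (1 / real (card S)) * (\<Sum>k\<in>S. norm (vs k - c))"
    by (intro mult_left_mono norm_sum) auto
  also have "\<dots> \<le> (1 / real (card S)) * (\<Sum>k\<in>S. R)"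
    by (intro mult_left_mono sum_mono assms(3)) auto
  also have "\<dots> = R" using cS by simp
  finally show ?thesis .
qed

lemma filt_bound:
  fixes vs :: "nat \<Rightarrow> 'a::real_normed_vector"
  assumes "is_med vs K r m" "G \<subseteq> {..<K}" "K < 2 * card G" "\<And>k. k \<in> G \<Longrightarrow> norm (vs k - c) \<le> V"
    and "0 \<le> r'"
  shows "norm (avg vs (filt vs K r' m) - c) \<le> r' + r + V"
proof -
  obtain h where h: "h \<in> G" "norm (vs h - vs m) \<le> r" using med_honest[OF assms(1-3)] by blast
  have mK: "m < K" using assms(1) by (simp add: is_med_def)
  show ?thesis
  proof (rule avg_bound)
    show "finite (filt vs K r' m)" by (simp add: filt_def)
    show "filt vs K r' m \<noteq> {}" using mK assms(5) by (auto simp: filt_def)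
    fix k assume "k \<in> filt vs K r' m"
    then have k: "norm (vs k - vs m) \<le> r'" by (simp add: filt_def)
    have "norm (vs k - c) \<le> norm (vs k - vs m) + norm (vs m - vs h) + norm (vs h - c)"
      by (metis add.commute norm_triangle_ineq4 diff_add_eq_diff_diff_swap  norm_diff_triangle_le order_refl)
    also have "\<dots> \<le> r' + r + V" using k h assms(4)[OF h(1)] by (simp add: norm_minus_commute)
    finally show "norm (vs k - c) \<le> r' + r + V" .
  qed
qed

lemma agg_bound:
  fixes vs :: "nat \<Rightarrow> 'a::real_normed_vector"
  assumes "agg_output vs K alpha T V mu" "0 \<le> T" "0 \<le> V"
    "G \<subseteq> {..<K}" "K < 2 * card G" "\<And>k. k \<in> G \<Longrightarrow> norm (vs k - c) \<le> V"
  shows "norm (mu - c) \<le> 3 * T + 7 * V"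
proof -
  have "\<exists>r r' m. is_med vs K r m \<and> mu = avg vs (filt vs K r' m) \<and> 0 \<le> r' \<and> r' + r \<le> 3 * T + 6 * V"
  proof -
    have "(\<exists>m. is_med vs K T m \<and> mu = avg vs (filt vs K (2 * T) m)) \<or> (\<exists>m'. is_med vs K (2 * V) m' \<and> mu = avg vs (filt vs K (4 * V) m'))"
      using assms(1) unfolding agg_output_def by blast
    then show ?thesis
    proof (elim disjE exE conjE)
      fix m assume "is_med vs K T m" "mu = avg vs (filt vs K (2 * T) m)"
      then show ?thesis using assms(2,3) by (intro exI[of _ T] exI[of _ "2 * T"] exI[of _ m]) simp
    next
      fix m assume "is_med vs K (2 * V) m" "mu = avg vs (filt vs K (4 * V) m)"
      then show ?thesis using assms(2,3) by (intro exI[of _ "2 * V"] exI[of _ "4 * V"] exI[of _ m]) simp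
    qed
  qed
  then obtain r r' m where m: "is_med vs K r m" "mu = avg vs (filt vs K r' m)" "0 \<le> r'" "r' + r \<le> 3 * T + 6 * V"
    by blast
  have "norm (mu - c) \<le> r' + r + V"
    unfolding m(2) by (rule filt_bound[OF m(1) assms(4,5,6) m(3)])
  then show ?thesis using m(4) by simp
qed


theorem lemma8:
  fixes f0 :: "'a::euclidean_space \<Rightarrow> 'b \<Rightarrow> real"   \<comment> \<open>f(x;\<xi>)\<close>
    and g :: "'a \<Rightarrow> 'b \<Rightarrow> 'a"                         \<comment> \<open>\<nabla>f(x;\<xi>)\<close>
    and f :: "'a \<Rightarrow> real" and gf :: "'a \<Rightarrow> 'a"          \<comment> \<open>f and \<nabla>f\<close>
    and D :: "'b measure" and L V :: real and xstar x0 :: 'a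
    and K :: nat and G :: "nat set" and alpha delta :: real
    and B :: "nat \<Rightarrow> nat" and eta :: "nat \<Rightarrow> real"
    and M :: "'w measure"
    and xi :: "nat \<Rightarrow> nat \<Rightarrow> nat \<Rightarrow> 'w \<Rightarrow> 'b"        \<comment> \<open>xi t k i = \<xi>_{t,i}^{(k)}\<close>
    and zeta :: "nat \<Rightarrow> nat \<Rightarrow> 'w \<Rightarrow> 'b"             \<comment> \<open>zeta t n = \<xi>_n^t\<close>
    and N :: "nat \<Rightarrow> 'w \<Rightarrow> nat"
    and mun :: "nat \<Rightarrow> nat \<Rightarrow> 'w \<Rightarrow> 'a"              \<comment> \<open>mun t k = \<mu>_t^{(k)}\<close>
    and mu :: "nat \<Rightarrow> 'w \<Rightarrow> 'a"                     \<comment> \<open>\<mu>_t\<close>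
    and x :: "nat \<Rightarrow> nat \<Rightarrow> 'w \<Rightarrow> 'a"                \<comment> \<open>x t n = x_n^t\<close>
    and X :: "nat \<Rightarrow> 'w \<Rightarrow> 'a"                      \<comment> \<open>X t = x~_t\<close>
  assumes D_prob: "prob_space D"
    and f0_int: "\<And>y. integrable D (f0 y)"
    and f_def: "\<And>y. f y = (\<integral>\<xi>. f0 y \<xi> \<partial>D)"
    and f0_deriv: "\<And>y \<xi>. \<xi> \<in> space D \<Longrightarrow> ((\<lambda>z. f0 z \<xi>) has_derivative (\<lambda>h. g y \<xi> \<bullet> h)) (at y)"
    and g_lip: "\<And>y z \<xi>. \<xi> \<in> space D \<Longrightarrow> norm (g y \<xi> - g z \<xi>) \<le> L * norm (y - z)"
    and f_deriv: "\<And>y. (f has_derivative (\<lambda>h. gf y \<bullet> h)) (at y)"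
    and gf_lip: "\<And>y z. norm (gf y - gf z) \<le> L * norm (y - z)"
    and g_var: "\<And>y \<xi>. \<xi> \<in> space D \<Longrightarrow> norm (g y \<xi> - gf y) \<le> V"
    and g_meas: "(\<lambda>(y, \<xi>). g y \<xi>) \<in> borel_measurable (borel \<Otimes>\<^sub>M D)"
    and xstar_min: "\<And>y. f xstar \<le> f y"
    and K_pos: "0 < K"
    and G_sub: "G \<subseteq> {..<K}"
    and G_card: "real (card G) \<ge> (1 - alpha) * real K"
    and alpha: "0 \<le> alpha" "alpha < 1 / 2"
    and delta: "0 < delta" "delta < 1"
    and B_pos: "\<And>t. 0 < B t"
    and eta_pos: "\<And>t. 0 < eta t"
    and eta_le: "\<And>t. 3 * L * real (B t) powr (2 / 3) * eta t \<le> 1"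
    and M_prob: "prob_space M"
    and xi_rv: "\<And>t k i. 1 \<le> t \<Longrightarrow> k \<in> G \<Longrightarrow> i < B t \<Longrightarrow>
                  xi t k i \<in> measurable M D \<and> distr M D (xi t k i) = D"
    and zeta_rv: "\<And>t n. 1 \<le> t \<Longrightarrow> zeta t n \<in> measurable M D \<and> distr M D (zeta t n) = D"
    and N_rv: "\<And>t. 1 \<le> t \<Longrightarrow> N t \<in> measurable M (count_space UNIV)"
    and N_geom: "\<And>t n. 1 \<le> t \<Longrightarrow>
                  measure M {\<omega> \<in> space M. N t \<omega> = n}
                    = (1 / (real (B t) + 1)) * (real (B t) / (real (B t) + 1)) ^ n"
    and indep: "prob_space.indep_sets M
                  (\<lambda>j. case j of
                      Samp t k i \<Rightarrow> gen_events M (xi t k i) D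
                    | Inner t n \<Rightarrow> gen_events M (zeta t n) D
                    | Geo t \<Rightarrow> gen_events M (N t) (count_space UNIV))
                  ({Samp t k i | t k i. 1 \<le> t \<and> k \<in> G \<and> i < B t}
                   \<union> {Inner t n | t n. 1 \<le> t} \<union> {Geo t | t. 1 \<le> t})"
    and X0: "\<And>\<omega>. \<omega> \<in> space M \<Longrightarrow> X 0 \<omega> = x0"
    and honest: "\<And>t k \<omega>. 1 \<le> t \<Longrightarrow> k \<in> G \<Longrightarrow> \<omega> \<in> space M \<Longrightarrow>
                  mun t k \<omega> = (1 / real (B t)) *\<^sub>R (\<Sum>i<B t. g (X (t - 1) \<omega>) (xi t k i \<omega>))"
    and byz_meas: "\<And>t k. 1 \<le> t \<Longrightarrow> k < K \<Longrightarrow> k \<notin> G \<Longrightarrow> mun t k \<in> borel_measurable M"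
    and agg: "\<And>t \<omega>. 1 \<le> t \<Longrightarrow> \<omega> \<in> space M \<Longrightarrow>
                  agg_output (\<lambda>k. mun t k \<omega>) K alpha
                    (2 * V * sqrt (2 * ln (2 * real K / delta) / real (B t))) V (mu t \<omega>)"
    and mu_meas: "\<And>t. 1 \<le> t \<Longrightarrow> mu t \<in> borel_measurable M"
    and x_0: "\<And>t \<omega>. 1 \<le> t \<Longrightarrow> \<omega> \<in> space M \<Longrightarrow> x t 0 \<omega> = X (t - 1) \<omega>"
    and x_step: "\<And>t n \<omega>. 1 \<le> t \<Longrightarrow> \<omega> \<in> space M \<Longrightarrow>
                  x t (Suc n) \<omega> = x t n \<omega> - eta t *\<^sub>R
                    (g (x t n \<omega>) (zeta t n \<omega>) - g (X (t - 1) \<omega>) (zeta t n \<omega>) + mu t \<omega>)"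
    and X_out: "\<And>t \<omega>. 1 \<le> t \<Longrightarrow> \<omega> \<in> space M \<Longrightarrow> X t \<omega> = x t (N t \<omega>) \<omega>"
  shows "\<forall>t\<ge>1.
           integrable M (\<lambda>\<omega>. (norm (X t \<omega> - X (t - 1) \<omega>))\<^sup>2)
         \<and> integrable M (\<lambda>\<omega>. f (X t \<omega>) - f xstar)
         \<and> integrable M (\<lambda>\<omega>. (norm (gf (X t \<omega>)))\<^sup>2)
         \<and> integrable M (\<lambda>\<omega>. \<bar>(mu t \<omega> - gf (X (t - 1) \<omega>)) \<bullet> (X t \<omega> - X (t - 1) \<omega>)\<bar>)
         \<and> integrable M (\<lambda>\<omega>. \<bar>(mu t \<omega> - gf (X (t - 1) \<omega>)) \<bullet> gf (X t \<omega>)\<bar>)"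
proof -
  interpret Mp: prob_space M by (rule M_prob)
  interpret Dp: prob_space D by (rule D_prob)
  obtain \<xi>0 where xi0: "\<xi>0 \<in> space D" using Dp.not_empty by blast
  have V0: "0 \<le> V" by (rule order_trans[OF norm_ge_zero g_var[OF xi0, of x0]])
  have L0: "0 \<le> L"
  proof -
    obtain e :: 'a where e: "e \<in> Basis" using nonempty_Basis by blast
    have "e \<noteq> 0" using e nonzero_Basis by blast
    then have "0 < norm e" by simp
    moreover have "0 \<le> L * norm e"
    proof -
      have a: "norm (gf (x0 + e) - gf x0) \<le> L * norm e" using gf_lip[of "x0 + e" x0] by simp
      show ?thesis by (rule order_trans[OF norm_ge_zero a])
    qed
    ultimately show ?thesis by (simp add: zero_le_mult_iff)
  qed
  have desc: "\<And>x y. f y \<le> f x + gf x \<bullet> (y - x) + L / 2 * (norm (y - x))\<^sup>2"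
    by (rule descent[OF f_deriv gf_lip])
  have gb: "\<And>y. (norm (gf y))\<^sup>2 \<le> 2 * L * (f y - f xstar)"
    by (rule grad_bound[OF desc xstar_min L0])
  have fmeas: "f \<in> borel_measurable borel"
    by (intro borel_measurable_continuous_onI has_derivative_continuous_on)
      (rule has_derivative_at_withinI[OF f_deriv])
  have gfmeas: "gf \<in> borel_measurable borel"
  proof (intro borel_measurable_continuous_onI lipschitz_on_continuous_on)
    show "L-lipschitz_on UNIV gf"
      by (rule lipschitz_onI) (use gf_lip L0 in \<open>auto simp: dist_norm\<close>)
  qed
  have etaL: "L * eta t \<le> 1/3" for t
  proof -
    have P: "1 \<le> real (B t) powr (2/3)" using B_pos[of t] by (intro ge_one_powr_ge_zero) auto
    have "3 * L * eta t * 1 \<le> 3 * L * eta t * real (B t) powr (2/3)"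
      by (rule mult_left_mono[OF P]) (use L0 eta_pos[of t] in simp)
    also have "\<dots> = 3 * L * real (B t) powr (2 / 3) * eta t" by (simp add: mult_ac)
    also have "\<dots> \<le> 1" by (rule eta_le)
    finally show ?thesis by simp
  qed
  define Tt where "Tt t = 2 * V * sqrt (2 * ln (2 * real K / delta) / real (B t))" for t
  define Eb where "Eb t = 3 * Tt t + 7 * V" for t
  define W where "W t = 2 * V + Eb t" for t
  have T0: "0 \<le> Tt t" for t
  proof -
    have "1 < 2 * real K / delta" using K_pos delta by (simp add: field_simps)
    then have "0 < ln (2 * real K / delta)" by simp
    then show ?thesis unfolding Tt_def using V0 by simp
  qed
  have Eb0: "0 \<le> Eb t" for t unfolding Eb_def using T0[of t] V0 by simp
  have W0: "0 \<le> W t" for t unfolding W_def using Eb0[of t] V0 by simp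
  have G2: "K < 2 * card G"
  proof -
    have "real K / 2 < (1 - alpha) * real K" using K_pos alpha by (simp add: field_simps)
    then have "real K < 2 * real (card G)" using G_card by linarith
    then show ?thesis by linarith
  qed
  have honestb: "norm (mun t k \<omega> - gf (X (t - 1) \<omega>)) \<le> V"
    if t: "1 \<le> t" and k: "k \<in> G" and \<omega>: "\<omega> \<in> space M" for t k \<omega>
  proof -
    have "mun t k \<omega> = avg (\<lambda>i. g (X (t - 1) \<omega>) (xi t k i \<omega>)) {..<B t}"
      using honest[OF t k \<omega>] by (simp add: avg_def)
    also have "norm (\<dots> - gf (X (t - 1) \<omega>)) \<le> V"
    proof (rule avg_bound)
      show "{..<B t} \<noteq> {}" using B_pos[of t] by auto
      fix i assume "i \<in> {..<B t}"
      then have "xi t k i \<omega> \<in> space D"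
        using measurable_space[OF xi_rv[OF t k, THEN conjunct1] \<omega>] by simp
      then show "norm (g (X (t - 1) \<omega>) (xi t k i \<omega>) - gf (X (t - 1) \<omega>)) \<le> V" by (rule g_var)
    qed simp
    finally show ?thesis .
  qed
  have Ebound: "norm (mu t \<omega> - gf (X (t - 1) \<omega>)) \<le> Eb t"
    if t: "1 \<le> t" and \<omega>: "\<omega> \<in> space M" for t \<omega>
    unfolding Eb_def Tt_def
    by (rule agg_bound[OF agg[OF t \<omega>] _ V0 G_sub G2 honestb[OF t _ \<omega>]]) (use T0[of t] in \<open>simp add: Tt_def\<close>)

  have gcomp: "(\<lambda>\<omega>. g (a \<omega>) (b \<omega>)) \<in> borel_measurable M"
    if a: "a \<in> borel_measurable M" and b: "b \<in> measurable M D" for a b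
  proof -
    have "(\<lambda>\<omega>. (\<lambda>(y, \<xi>). g y \<xi>) (a \<omega>, b \<omega>)) \<in> borel_measurable M"
      by (rule measurable_compose[OF measurable_Pair[OF a b] g_meas])
    then show ?thesis by simp
  qed
  have xmeas: "x t n \<in> borel_measurable M"
    if t: "1 \<le> t" and Xm: "X (t - 1) \<in> borel_measurable M" for t n
  proof (induction n)
    case 0
    show ?case using Xm measurable_cong[of M "x t 0" "X (t - 1)"] x_0[OF t] by simp
  next
    case (Suc n)
    have "(\<lambda>\<omega>. x t n \<omega> - eta t *\<^sub>R (g (x t n \<omega>) (zeta t n \<omega>) - g (X (t - 1) \<omega>) (zeta t n \<omega>) + mu t \<omega>))
          \<in> borel_measurable M"
      using Suc gcomp[OF Suc zeta_rv[OF t, THEN conjunct1]] gcomp[OF Xm zeta_rv[OF t, THEN conjunct1]]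
        mu_meas[OF t]
      by (intro borel_measurable_diff borel_measurable_add borel_measurable_scaleR borel_measurable_const) auto
    then show ?case using measurable_cong[of M "x t (Suc n)"] x_step[OF t] by simp
  qed
  have Xmeas: "X t \<in> borel_measurable M" for t
  proof (induction t)
    case 0
    show ?case using measurable_cong[of M "X 0" "\<lambda>_. x0"] X0 by simp
  next
    case (Suc t)
    have t: "1 \<le> Suc t" by simp
    have "(\<lambda>\<omega>. x (Suc t) (N (Suc t) \<omega>) \<omega>) \<in> borel_measurable M"
      by (rule measurable_compose_countable[OF _ N_rv[OF t]]) (use xmeas[OF t] Suc in simp)
    then show ?case using measurable_cong[of M "X (Suc t)"] X_out[OF t] by simp
  qed
  have fXmeas: "(\<lambda>\<omega>. f (X t \<omega>)) \<in> borel_measurable M" for t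
    using measurable_compose[OF Xmeas fmeas] by simp
  have gfXmeas: "(\<lambda>\<omega>. gf (X t \<omega>)) \<in> borel_measurable M" for t
    using measurable_compose[OF Xmeas gfmeas] by simp
  have Nmeas: "(\<lambda>\<omega>. real (N t \<omega>)) \<in> borel_measurable M" if "1 \<le> t" for t
    by (rule measurable_compose[OF N_rv[OF that]]) simp

  have inner: "f (X t \<omega>) - f xstar \<le> f (X (t - 1) \<omega>) - f xstar + real (N t \<omega>) * eta t * (W t)\<^sup>2
      \<and> (norm (X t \<omega> - X (t - 1) \<omega>))\<^sup>2 \<le> 2 * (real (N t \<omega>))\<^sup>2 * (eta t)\<^sup>2 *
           (2 * L * (f (X (t - 1) \<omega>) - f xstar) + 2 * L * real (N t \<omega>) * eta t * (W t)\<^sup>2 + (W t)\<^sup>2)"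
    if t: "1 \<le> t" and \<omega>: "\<omega> \<in> space M" for t \<omega>
  proof -
    define w where "w n = (g (x t n \<omega>) (zeta t n \<omega>) - gf (x t n \<omega>))
        - (g (X (t - 1) \<omega>) (zeta t n \<omega>) - gf (X (t - 1) \<omega>)) + (mu t \<omega> - gf (X (t - 1) \<omega>))" for n
    have step: "x t (Suc n) \<omega> = x t n \<omega> - eta t *\<^sub>R (gf (x t n \<omega>) + w n)" for n
      using x_step[OF t \<omega>, of n] by (simp add: w_def algebra_simps)
    have wb: "norm (w n) \<le> W t" for n
    proof -
      have z: "zeta t n \<omega> \<in> space D" using measurable_space[OF zeta_rv[OF t, THEN conjunct1] \<omega>] by simp
      have "norm (w n) \<le> norm (g (x t n \<omega>) (zeta t n \<omega>) - gf (x t n \<omega>))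
          + norm (g (X (t - 1) \<omega>) (zeta t n \<omega>) - gf (X (t - 1) \<omega>)) + norm (mu t \<omega> - gf (X (t - 1) \<omega>))"
        unfolding w_def by (rule order_trans[OF norm_triangle_ineq add_right_mono[OF norm_triangle_ineq4]])
      also have "\<dots> \<le> V + V + Eb t"
        using g_var[OF z] Ebound[OF t \<omega>] by (intro add_mono) auto
      finally show ?thesis by (simp add: W_def)
    qed
    note IL = inner_loop[where xs = "\<lambda>n. x t n \<omega>", OF desc gb L0 eta_pos etaL W0 step wb]
    show ?thesis using IL[of "N t \<omega>"] X_out[OF t \<omega>] x_0[OF t \<omega>] by simp
  qed

  define Phi where "Phi s \<omega> = (f x0 - f xstar) + (\<Sum>r\<in>{1..s}. eta r * (W r)\<^sup>2 * real (N r \<omega>))" for s \<omega>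
  have PhiB: "f (X s \<omega>) - f xstar \<le> Phi s \<omega>" if \<omega>: "\<omega> \<in> space M" for s \<omega>
  proof (induction s)
    case 0
    show ?case using X0[OF \<omega>] by (simp add: Phi_def)
  next
    case (Suc s)
    have "f (X (Suc s) \<omega>) - f xstar \<le> f (X s \<omega>) - f xstar + real (N (Suc s) \<omega>) * eta (Suc s) * (W (Suc s))\<^sup>2"
      using inner[of "Suc s" \<omega>] \<omega> by simp
    also have "\<dots> \<le> Phi (Suc s) \<omega>" using Suc by (simp add: Phi_def mult_ac)
    finally show ?case .
  qed

  have N3: "integrable M (\<lambda>\<omega>. real (N t \<omega>) ^ 3)" if t: "1 \<le> t" for t
  proof (rule moment3[OF M_prob N_rv[OF t]])
    show "measure M {\<omega> \<in> space M. N t \<omega> = n} = (1 / (real (B t) + 1)) * (real (B t) / (real (B t) + 1)) ^ n" for n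
      by (rule N_geom[OF t])
  qed auto
  have powb: "real n ^ k \<le> 1 + real n ^ 3" if "k \<le> 3" for n k :: nat
  proof (cases "n = 0")
    case True then show ?thesis by (cases k) auto
  next
    case False
    then have "real n ^ k \<le> real n ^ 3" using that by (intro power_increasing) auto
    then show ?thesis by simp
  qed
  have Nk: "integrable M (\<lambda>\<omega>. real (N t \<omega>) ^ k)" if t: "1 \<le> t" and k: "k \<le> 3" for t k
  proof (rule Bochner_Integration.integrable_bound)
    show "integrable M (\<lambda>\<omega>. 1 + real (N t \<omega>) ^ 3)" using N3[OF t] by simp
    show "(\<lambda>\<omega>. real (N t \<omega>) ^ k) \<in> borel_measurable M" using Nmeas[OF t] by simp
    show "AE \<omega> in M. norm (real (N t \<omega>) ^ k) \<le> norm (1 + real (N t \<omega>) ^ 3)"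
      using powb[OF k] by (intro AE_I2) simp
  qed
  have N1: "integrable M (\<lambda>\<omega>. real (N t \<omega>))" if t: "1 \<le> t" for t
    using Nk[OF t, of 1] by simp
  have prodb: "a\<^sup>2 * b \<le> a ^ 3 + b ^ 3" if "0 \<le> a" "0 \<le> b" for a b :: real
  proof (cases "a \<le> b")
    case True
    have "a\<^sup>2 * b \<le> b\<^sup>2 * b" using True that by (intro mult_right_mono power_mono) auto
    moreover have "0 \<le> a * a * a" "0 \<le> b * b * b" using that by simp_all
    ultimately show ?thesis unfolding power3_eq_cube power2_eq_square by linarith
  next
    case False
    have "a\<^sup>2 * b \<le> a\<^sup>2 * a" using False that by (intro mult_left_mono) auto
    moreover have "0 \<le> a * a * a" "0 \<le> b * b * b" using that by simp_all
    ultimately show ?thesis unfolding power3_eq_cube power2_eq_square by linarith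
  qed
  have Nprod: "integrable M (\<lambda>\<omega>. (real (N t \<omega>))\<^sup>2 * real (N r \<omega>))" if t: "1 \<le> t" and r: "1 \<le> r" for t r
  proof (rule Bochner_Integration.integrable_bound)
    show "integrable M (\<lambda>\<omega>. real (N t \<omega>) ^ 3 + real (N r \<omega>) ^ 3)" using N3[OF t] N3[OF r] by simp
    show "(\<lambda>\<omega>. (real (N t \<omega>))\<^sup>2 * real (N r \<omega>)) \<in> borel_measurable M" using Nmeas[OF t] Nmeas[OF r] by simp
    show "AE \<omega> in M. norm ((real (N t \<omega>))\<^sup>2 * real (N r \<omega>)) \<le> norm (real (N t \<omega>) ^ 3 + real (N r \<omega>) ^ 3)"
      using prodb by (intro AE_I2) simp
  qed
  have PhiI: "integrable M (Phi s)" for s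
    unfolding Phi_def using N1 by (intro Bochner_Integration.integrable_add integrable_sum integrable_mult_right) auto
  have Phi_nn: "0 \<le> Phi s \<omega>" if "\<omega> \<in> space M" for s \<omega>
    using PhiB[OF that, of s] xstar_min[of "X s \<omega>"] by linarith

  show ?thesis
  proof (intro allI impI)
    fix t :: nat assume t: "1 \<le> t"
    have I2: "integrable M (\<lambda>\<omega>. f (X t \<omega>) - f xstar)"
    proof (rule Bochner_Integration.integrable_bound[OF PhiI[of t]])
      show "(\<lambda>\<omega>. f (X t \<omega>) - f xstar) \<in> borel_measurable M" using fXmeas by simp
      show "AE \<omega> in M. norm (f (X t \<omega>) - f xstar) \<le> norm (Phi t \<omega>)"
      proof (rule AE_I2)
        fix \<omega> assume \<omega>: "\<omega> \<in> space M"
        have a: "0 \<le> f (X t \<omega>) - f xstar" using xstar_min[of "X t \<omega>"] by simp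
        have b: "f (X t \<omega>) - f xstar \<le> Phi t \<omega>" by (rule PhiB[OF \<omega>])
        show "norm (f (X t \<omega>) - f xstar) \<le> norm (Phi t \<omega>)"
          unfolding real_norm_def using a b abs_ge_self[of "Phi t \<omega>"] abs_of_nonneg[OF a] by linarith
      qed
    qed
    have I3: "integrable M (\<lambda>\<omega>. (norm (gf (X t \<omega>)))\<^sup>2)"
    proof (rule Bochner_Integration.integrable_bound)
      show "integrable M (\<lambda>\<omega>. 2 * L * (f (X t \<omega>) - f xstar))" using I2 by simp
      show "(\<lambda>\<omega>. (norm (gf (X t \<omega>)))\<^sup>2) \<in> borel_measurable M" using gfXmeas by simp
      show "AE \<omega> in M. norm ((norm (gf (X t \<omega>)))\<^sup>2) \<le> norm (2 * L * (f (X t \<omega>) - f xstar))"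
      proof (rule AE_I2)
        fix \<omega> assume \<omega>: "\<omega> \<in> space M"
        have a: "(norm (gf (X t \<omega>)))\<^sup>2 \<le> 2 * L * (f (X t \<omega>) - f xstar)" by (rule gb)
        show "norm ((norm (gf (X t \<omega>)))\<^sup>2) \<le> norm (2 * L * (f (X t \<omega>) - f xstar))"
          unfolding real_norm_def using a abs_ge_self[of "2 * L * (f (X t \<omega>) - f xstar)"] by simp
      qed
    qed
    define u where "u \<omega> = real (N t \<omega>)" for \<omega>
    define C1 where "C1 = 2 * (eta t)\<^sup>2 * (W t)\<^sup>2"
    define C2 where "C2 = 4 * L * (eta t)\<^sup>2"
    define C3 where "C3 = 4 * L * (eta t) ^ 3 * (W t)\<^sup>2"
    define R where "R \<omega> = C1 * (u \<omega>)\<^sup>2 + C2 * ((f x0 - f xstar) * (u \<omega>)\<^sup>2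
        + (\<Sum>r\<in>{1..t - 1}. eta r * (W r)\<^sup>2 * ((u \<omega>)\<^sup>2 * real (N r \<omega>)))) + C3 * u \<omega> ^ 3" for \<omega>
    have RI: "integrable M R"
      unfolding R_def u_def using Nk[OF t] Nprod[OF t]
      by (intro Bochner_Integration.integrable_add integrable_sum integrable_mult_right) auto
    have I1: "integrable M (\<lambda>\<omega>. (norm (X t \<omega> - X (t - 1) \<omega>))\<^sup>2)"
    proof (rule Bochner_Integration.integrable_bound[OF RI])
      show "(\<lambda>\<omega>. (norm (X t \<omega> - X (t - 1) \<omega>))\<^sup>2) \<in> borel_measurable M" using Xmeas by simp
      show "AE \<omega> in M. norm ((norm (X t \<omega> - X (t - 1) \<omega>))\<^sup>2) \<le> norm (R \<omega>)"
      proof (rule AE_I2)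
        fix \<omega> assume \<omega>: "\<omega> \<in> space M"
        have "(norm (X t \<omega> - X (t - 1) \<omega>))\<^sup>2 \<le> 2 * (u \<omega>)\<^sup>2 * (eta t)\<^sup>2 *
           (2 * L * (f (X (t - 1) \<omega>) - f xstar) + 2 * L * u \<omega> * eta t * (W t)\<^sup>2 + (W t)\<^sup>2)"
          using inner[OF t \<omega>] by (simp add: u_def)
        also have "\<dots> \<le> 2 * (u \<omega>)\<^sup>2 * (eta t)\<^sup>2 *
           (2 * L * Phi (t - 1) \<omega> + 2 * L * u \<omega> * eta t * (W t)\<^sup>2 + (W t)\<^sup>2)"
          using PhiB[OF \<omega>, of "t - 1"] L0 by (intro mult_left_mono add_right_mono) auto
        also have "\<dots> = R \<omega>"
          by (simp add: R_def Phi_def C1_def C2_def C3_def sum_distrib_left algebra_simps power2_eq_square power3_eq_cube)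
        finally have "(norm (X t \<omega> - X (t - 1) \<omega>))\<^sup>2 \<le> R \<omega>" .
        then show "norm ((norm (X t \<omega> - X (t - 1) \<omega>))\<^sup>2) \<le> norm (R \<omega>)" by simp
      qed
    qed
    have sq: "a \<le> 1 + a\<^sup>2" for a :: real
    proof -
      have "0 \<le> (a - 1)\<^sup>2" by simp
      then have "2 * a \<le> a\<^sup>2 + 1" by (simp add: power2_eq_square algebra_simps)
      moreover have "0 \<le> a\<^sup>2" by simp
      ultimately show ?thesis by linarith
    qed
    have emeas: "(\<lambda>\<omega>. mu t \<omega> - gf (X (t - 1) \<omega>)) \<in> borel_measurable M"
      using mu_meas[OF t] gfXmeas by simp
    have I4: "integrable M (\<lambda>\<omega>. \<bar>(mu t \<omega> - gf (X (t - 1) \<omega>)) \<bullet> (X t \<omega> - X (t - 1) \<omega>)\<bar>)"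
    proof (rule Bochner_Integration.integrable_bound)
      show "integrable M (\<lambda>\<omega>. Eb t * (1 + (norm (X t \<omega> - X (t - 1) \<omega>))\<^sup>2))" using I1 by simp
      show "(\<lambda>\<omega>. \<bar>(mu t \<omega> - gf (X (t - 1) \<omega>)) \<bullet> (X t \<omega> - X (t - 1) \<omega>)\<bar>) \<in> borel_measurable M"
        using emeas Xmeas by simp
      show "AE \<omega> in M. norm \<bar>(mu t \<omega> - gf (X (t - 1) \<omega>)) \<bullet> (X t \<omega> - X (t - 1) \<omega>)\<bar>
          \<le> norm (Eb t * (1 + (norm (X t \<omega> - X (t - 1) \<omega>))\<^sup>2))"
      proof (rule AE_I2)
        fix \<omega> assume \<omega>: "\<omega> \<in> space M"
        have "\<bar>(mu t \<omega> - gf (X (t - 1) \<omega>)) \<bullet> (X t \<omega> - X (t - 1) \<omega>)\<bar>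
            \<le> norm (mu t \<omega> - gf (X (t - 1) \<omega>)) * norm (X t \<omega> - X (t - 1) \<omega>)"
          by (rule Cauchy_Schwarz_ineq2)
        also have "\<dots> \<le> Eb t * (1 + (norm (X t \<omega> - X (t - 1) \<omega>))\<^sup>2)"
          using Ebound[OF t \<omega>] sq[of "norm (X t \<omega> - X (t - 1) \<omega>)"] Eb0[of t]
          by (intro mult_mono) auto
        finally show "norm \<bar>(mu t \<omega> - gf (X (t - 1) \<omega>)) \<bullet> (X t \<omega> - X (t - 1) \<omega>)\<bar>
          \<le> norm (Eb t * (1 + (norm (X t \<omega> - X (t - 1) \<omega>))\<^sup>2))" using Eb0[of t] by simp
      qed
    qed
    have I5: "integrable M (\<lambda>\<omega>. \<bar>(mu t \<omega> - gf (X (t - 1) \<omega>)) \<bullet> gf (X t \<omega>)\<bar>)"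
    proof (rule Bochner_Integration.integrable_bound)
      show "integrable M (\<lambda>\<omega>. Eb t * (1 + (norm (gf (X t \<omega>)))\<^sup>2))" using I3 by simp
      show "(\<lambda>\<omega>. \<bar>(mu t \<omega> - gf (X (t - 1) \<omega>)) \<bullet> gf (X t \<omega>)\<bar>) \<in> borel_measurable M"
        using emeas gfXmeas by simp
      show "AE \<omega> in M. norm \<bar>(mu t \<omega> - gf (X (t - 1) \<omega>)) \<bullet> gf (X t \<omega>)\<bar>
          \<le> norm (Eb t * (1 + (norm (gf (X t \<omega>)))\<^sup>2))"
      proof (rule AE_I2)
        fix \<omega> assume \<omega>: "\<omega> \<in> space M"
        have "\<bar>(mu t \<omega> - gf (X (t - 1) \<omega>)) \<bullet> gf (X t \<omega>)\<bar>
            \<le> norm (mu t \<omega> - gf (X (t - 1) \<omega>)) * norm (gf (X t \<omega>))"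
          by (rule Cauchy_Schwarz_ineq2)
        also have "\<dots> \<le> Eb t * (1 + (norm (gf (X t \<omega>)))\<^sup>2)"
          using Ebound[OF t \<omega>] sq[of "norm (gf (X t \<omega>))"] Eb0[of t]
          by (intro mult_mono) auto
        finally show "norm \<bar>(mu t \<omega> - gf (X (t - 1) \<omega>)) \<bullet> gf (X t \<omega>)\<bar>
          \<le> norm (Eb t * (1 + (norm (gf (X t \<omega>)))\<^sup>2))" using Eb0[of t] by simp
      qed
    qed
    show "integrable M (\<lambda>\<omega>. (norm (X t \<omega> - X (t - 1) \<omega>))\<^sup>2)
         \<and> integrable M (\<lambda>\<omega>. f (X t \<omega>) - f xstar)
         \<and> integrable M (\<lambda>\<omega>. (norm (gf (X t \<omega>)))\<^sup>2)
         \<and> integrable M (\<lambda>\<omega>. \<bar>(mu t \<omega> - gf (X (t - 1) \<omega>)) \<bullet> (X t \<omega> - X (t - 1) \<omega>)\<bar>)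
         \<and> integrable M (\<lambda>\<omega>. \<bar>(mu t \<omega> - gf (X (t - 1) \<omega>)) \<bullet> gf (X t \<omega>)\<bar>)"
      using I1 I2 I3 I4 I5 by blast
  qed
qed


end
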